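(* Let $u,v:\mathbb{R}/2\pi\mathbb{Z}\times[0,1]\to\mathbb{R}^3$ and $w:\mathbb{R}/2\pi\mathbb{Z}\times[0,1]\to\mathbb{R}$ be smooth functions, $2\pi$-periodic in $t$, and let $a,\beta,\alpha:[0,1]\to\mathbb{R}$. Suppose that for all $(t,\Omega)$ \[ \begin{aligned} \partial_tv&=-\beta e_1+\Omega^2\bar Iu+2\Omega\bar Jv-w^3(u-Su)-Rw^3\,(u-S^2u),\\ \partial_tu&=v,\\ \partial_tw&=-\alpha-w^3\big\langle u-Su,\,L_a(v-Sv)\big\rangle, \end{aligned} \] and that for all $\Omega\in[0,1]$ \[ u_3(0,\Omega)=1,\qquad \frac1{2\pi}\int_0^{2\pi}u_1(t,\Omega)\,dt=0,\qquad \Big[w^2\big\langle u-Su,\,L_a(u-Su)\big\rangle\Big](0,\Omega)=1. \] Then $\alpha(\Omega)=0$ for all $\Omega\in[0,1]$.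
   Context: $e_1=(1,0,0)$, $\bar I=\mathrm{diag}(1,1,0)$, $\bar J=\begin{pmatrix}0&-1&0\\1&0&0\\0&0&0\end{pmatrix}$, $L_a=\mathrm{diag}(1,1,a)$ (with $a=a(\Omega)$). $[S^j\phi](t,\Omega)=\phi(t+4\pi j/3,\Omega)$ and $[R\phi](t,\Omega)=\phi(-t,\Omega)$; $Rw^3$ denotes the function $(t,\Omega)\mapsto w(-t,\Omega)^3$. Products of a scalar function with a vector function are componentwise, e.g. $w^3(u-Su)=(w^3(u_1-Su_1),w^3(u_2-Su_2),w^3(u_3-Su_3))$; $\langle\cdot,\cdot\rangle$ is the Euclidean inner product in $\mathbb{R}^3$. *)

theory Defs
  imports "HOL-Analysis.Analysis"
begin

text \<open>P i j is the partial derivative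
  of order i in t and order j in Omega.\<close>
definition smooth_strip :: "(real \<Rightarrow> real \<Rightarrow> 'a::real_normed_vector) \<Rightarrow> bool" where
  "smooth_strip f \<longleftrightarrow>
     (\<exists>P :: nat \<Rightarrow> nat \<Rightarrow> real \<Rightarrow> real \<Rightarrow> 'a.
        P 0 0 = f \<and>
        (\<forall>i j. continuous_on (UNIV \<times> {0..1}) (\<lambda>(t, \<Omega>). P i j t \<Omega>) \<and>
               (\<forall>t. \<forall>\<Omega>\<in>{0..1}.
                  ((\<lambda>s. P i j s \<Omega>) has_vector_derivative P (Suc i) j t \<Omega>) (at t) \<and>
                  ((\<lambda>s. P i j t s) has_vector_derivative P i (Suc j) t \<Omega>) (at \<Omega> within {0..1}))))"

definition periodic_t :: "(real \<Rightarrow> real \<Rightarrow> 'a) \<Rightarrow> bool" where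
  "periodic_t f \<longleftrightarrow> (\<forall>t. \<forall>\<Omega>\<in>{0..1}. f (t + 2 * pi) \<Omega> = f t \<Omega>)"

definition e1 :: "real ^ 3" where
  "e1 = vector [1, 0, 0]"

definition Ibar :: "real ^ 3 ^ 3" where
  "Ibar = vector [vector [1, 0, 0], vector [0, 1, 0], vector [0, 0, 0]]"

definition Jbar :: "real ^ 3 ^ 3" where
  "Jbar = vector [vector [0, -1, 0], vector [1, 0, 0], vector [0, 0, 0]]"

definition La :: "real \<Rightarrow> real ^ 3 ^ 3" where
  "La a = vector [vector [1, 0, 0], vector [0, 1, 0], vector [0, 0, a]]"

definition Sh :: "nat \<Rightarrow> (real \<Rightarrow> real \<Rightarrow> 'a) \<Rightarrow> real \<Rightarrow> real \<Rightarrow> 'a" where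
  "Sh j \<phi> t \<Omega> = \<phi> (t + 4 * pi * real j / 3) \<Omega>"

definition Rf :: "(real \<Rightarrow> real \<Rightarrow> 'a) \<Rightarrow> real \<Rightarrow> real \<Rightarrow> 'a" where
  "Rf \<phi> t \<Omega> = \<phi> (-t) \<Omega>"

end

theory Submission
  imports Defs
begin

lemma zero_cross:
  fixes f f' :: "real \<Rightarrow> real"
  assumes der: "\<And>t. DERIV f t :> f' t" and z: "\<And>t. f t = 0 \<Longrightarrow> f' t = k"
    and k: "k > 0" and ab: "a < b" and fa: "f a > 0" and fb: "f b < 0"
  shows False
proof -
  have cont: "continuous_on {a..b} f"
    using der by (meson DERIV_isCont continuous_at_imp_continuous_on)
  define Z where "Z = {t\<in>{a..b}. f t = 0}"
  have "\<exists>x. a \<le> x \<and> x \<le> b \<and> f x = 0"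
    by (rule IVT2') (use fa fb ab cont in auto)
  then have ne: "Z \<noteq> {}" unfolding Z_def by auto
  have bdd: "bdd_below Z" unfolding Z_def by (rule bdd_belowI[of _ a]) auto
  have cl: "closed Z" unfolding Z_def
    using continuous_closed_preimage_constant[OF cont, of 0] by (simp add: Collect_conj_eq Int_commute vimage_def)
  define t1 where "t1 = Inf Z"
  have t1Z: "t1 \<in> Z" unfolding t1_def using closed_contains_Inf[OF ne bdd cl] .
  then have t1: "a \<le> t1" "t1 \<le> b" "f t1 = 0" unfolding Z_def by auto
  have at1: "a < t1" using t1 fa by (cases "a = t1") auto
  obtain d where d: "d > 0" "\<And>h. h > 0 \<Longrightarrow> h < d \<Longrightarrow> f (t1 - h) < f t1"
    using DERIV_pos_inc_left[OF der[of t1]] z[OF t1(3)] k by auto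
  define h where "h = min (d/2) ((t1 - a)/2)"
  have h: "h > 0" "h < d" "a < t1 - h"
    using d(1) at1 unfolding h_def by (auto simp: min_def field_simps)
  have fh: "f (t1 - h) < 0" using d(2)[OF h(1,2)] t1 by simp
  have cont2: "continuous_on {a..t1-h} f" using cont
    by (rule continuous_on_subset) (use t1 h in auto)
  obtain x where x: "a \<le> x" "x \<le> t1 - h" "f x = 0"
    using IVT2'[of f "t1-h" 0 a] fa fh h cont2 by auto
  have "x \<in> Z" using x t1 h unfolding Z_def by auto
  then have "t1 \<le> x" unfolding t1_def by (rule cInf_lower[OF _ bdd])
  then show False using x h by simp
qed

lemma no_periodic_zero:
  fixes f f' :: "real \<Rightarrow> real"
  assumes der: "\<And>t. DERIV f t :> f' t" and z: "\<And>t. f t = 0 \<Longrightarrow> f' t = k"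
    and k: "k > 0" and T: "T > 0" and f0: "f t0 = 0" and fT: "f (t0 + T) = 0"
  shows False
proof -
  obtain d1 where d1: "d1 > 0" "\<And>h. h > 0 \<Longrightarrow> h < d1 \<Longrightarrow> f t0 < f (t0 + h)"
    using DERIV_pos_inc_right[OF der[of t0]] z[OF f0] k by auto
  obtain d2 where d2: "d2 > 0" "\<And>h. h > 0 \<Longrightarrow> h < d2 \<Longrightarrow> f (t0 + T - h) < f (t0 + T)"
    using DERIV_pos_inc_left[OF der[of "t0+T"]] z[OF fT] k by auto
  define h where "h = min (T/3) (min (d1/2) (d2/2))"
  have h: "h > 0" "h < d1" "h < d2" "h < T/2" using d1 d2 T by (auto simp: h_def)
  show False
    by (rule zero_cross[OF der z k, of "t0+h" "t0+T-h"]) (use h d1 d2 f0 fT in auto)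
qed

lemma no_periodic_zero':
  fixes f f' :: "real \<Rightarrow> real"
  assumes der: "\<And>t. DERIV f t :> f' t" and z: "\<And>t. f t = 0 \<Longrightarrow> f' t = k"
    and k: "k \<noteq> 0" and T: "T > 0" and f0: "f t0 = 0" and fT: "f (t0 + T) = 0"
  shows False
proof (cases "k > 0")
  case True then show ?thesis using no_periodic_zero[of f f' k T t0] der z T f0 fT by blast
next
  case False
  then have k': "-k > 0" using k by simp
  show ?thesis
    by (rule no_periodic_zero[of "\<lambda>t. - f t" "\<lambda>t. - f' t" "-k", OF _ _ k' T])
       (use der z f0 fT in \<open>auto intro: derivative_eq_intros\<close>)
qed

lemma La_inner: "(x::real^3) \<bullet> (La c *v y) = x$1*y$1 + x$2*y$2 + c*x$3*y$3"
  by (simp add: La_def inner_vec_def matrix_vector_mult_def sum_3)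

lemma vnth_deriv:
  assumes "(f has_vector_derivative D) (at t)"
  shows "((\<lambda>s. f s $ i) has_real_derivative D $ i) (at t)"
  using bounded_linear.has_vector_derivative[OF bounded_linear_vec_nth assms]
  by (simp add: has_real_derivative_iff_has_vector_derivative)
theorem lemma2p4:
  fixes u v :: "real \<Rightarrow> real \<Rightarrow> real ^ 3"
    and w :: "real \<Rightarrow> real \<Rightarrow> real"
    and a \<beta> \<alpha> :: "real \<Rightarrow> real"
  assumes smooth_u: "smooth_strip u" and smooth_v: "smooth_strip v" and smooth_w: "smooth_strip w"
    and per_u: "periodic_t u" and per_v: "periodic_t v" and per_w: "periodic_t w"
    and eq_v: "\<And>t \<Omega>. \<Omega> \<in> {0..1} \<Longrightarrow>
      ((\<lambda>s. v s \<Omega>) has_vector_derivative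
         (- \<beta> \<Omega>) *\<^sub>R e1 + \<Omega>\<^sup>2 *\<^sub>R (Ibar *v u t \<Omega>) + (2 * \<Omega>) *\<^sub>R (Jbar *v v t \<Omega>)
         - (w t \<Omega> ^ 3) *\<^sub>R (u t \<Omega> - Sh 1 u t \<Omega>)
         - (Rf w t \<Omega> ^ 3) *\<^sub>R (u t \<Omega> - Sh 2 u t \<Omega>)) (at t)"
    and eq_u: "\<And>t \<Omega>. \<Omega> \<in> {0..1} \<Longrightarrow>
      ((\<lambda>s. u s \<Omega>) has_vector_derivative v t \<Omega>) (at t)"
    and eq_w: "\<And>t \<Omega>. \<Omega> \<in> {0..1} \<Longrightarrow>
      ((\<lambda>s. w s \<Omega>) has_real_derivative
         - \<alpha> \<Omega> - w t \<Omega> ^ 3 * ((u t \<Omega> - Sh 1 u t \<Omega>) \<bullet> (La (a \<Omega>) *v (v t \<Omega> - Sh 1 v t \<Omega>)))) (at t)"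
    and norm_u3: "\<And>\<Omega>. \<Omega> \<in> {0..1} \<Longrightarrow> u 0 \<Omega> $ 3 = 1"
    and mean_u1: "\<And>\<Omega>. \<Omega> \<in> {0..1} \<Longrightarrow> (1 / (2 * pi)) * integral {0..2 * pi} (\<lambda>t. u t \<Omega> $ 1) = 0"
    and norm_w: "\<And>\<Omega>. \<Omega> \<in> {0..1} \<Longrightarrow>
      w 0 \<Omega> ^ 2 * ((u 0 \<Omega> - Sh 1 u 0 \<Omega>) \<bullet> (La (a \<Omega>) *v (u 0 \<Omega> - Sh 1 u 0 \<Omega>))) = 1"
  shows "\<forall>\<Omega>\<in>{0..1}. \<alpha> \<Omega> = 0"
proof
  fix \<Omega> :: real assume O: "\<Omega> \<in> {0..1}"
  define sh where "sh = 4 * pi / 3"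
  have Sh1: "\<And>\<phi> t. Sh 1 \<phi> t \<Omega> = \<phi> (t + sh) \<Omega>" by (simp add: Sh_def sh_def)
  define c where "c = (\<lambda>t. (u t \<Omega> $ 1 - u (t + sh) \<Omega> $ 1) * (v t \<Omega> $ 1 - v (t + sh) \<Omega> $ 1)
     + (u t \<Omega> $ 2 - u (t + sh) \<Omega> $ 2) * (v t \<Omega> $ 2 - v (t + sh) \<Omega> $ 2)
     + a \<Omega> * (u t \<Omega> $ 3 - u (t + sh) \<Omega> $ 3) * (v t \<Omega> $ 3 - v (t + sh) \<Omega> $ 3))"
  define f' where "f' = (\<lambda>t. - \<alpha> \<Omega> - w t \<Omega> ^ 3 * c t)"
  have dw: "\<And>t. ((\<lambda>s. w s \<Omega>) has_real_derivative f' t) (at t)"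
    using eq_w[OF O] unfolding Sh1 La_inner f'_def c_def by (simp add: algebra_simps)
  have du: "\<And>i t. ((\<lambda>s. u s \<Omega> $ i) has_real_derivative v t \<Omega> $ i) (at t)"
    by (rule vnth_deriv[OF eq_u[OF O]])
  have dus: "\<And>i t. ((\<lambda>s. u (s + sh) \<Omega> $ i) has_real_derivative v (t + sh) \<Omega> $ i) (at t)"
    using DERIV_shift[of "\<lambda>s. u s \<Omega> $ i" "v (t + sh) \<Omega> $ i" t sh for i t] du by simp
  have pw: "\<And>t. w (t + 2 * pi) \<Omega> = w t \<Omega>" using per_w O unfolding periodic_t_def by blast
  have pu: "\<And>t. u (t + 2 * pi) \<Omega> = u t \<Omega>" using per_u O unfolding periodic_t_def by blast
  show "\<alpha> \<Omega> = 0"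
  proof (rule ccontr)
    assume an: "\<alpha> \<Omega> \<noteq> 0"
    show False
    proof (cases "\<exists>t0. w t0 \<Omega> = 0")
      case True
      then obtain t0 where t0: "w t0 \<Omega> = 0" by blast
      show False
        by (rule no_periodic_zero'[of "\<lambda>s. w s \<Omega>" f' "- \<alpha> \<Omega>" "2 * pi" t0])
           (use dw an t0 pw in \<open>auto simp: f'_def\<close>)
    next
      case False
      then have wn: "\<And>t. w t \<Omega> \<noteq> 0" by blast
      define g where "g = (\<lambda>t. 1 / (w t \<Omega>)^2 - ((u t \<Omega> $ 1 - u (t + sh) \<Omega> $ 1)^2
          + (u t \<Omega> $ 2 - u (t + sh) \<Omega> $ 2)^2 + a \<Omega> * (u t \<Omega> $ 3 - u (t + sh) \<Omega> $ 3)^2))"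
      have dg: "(g has_real_derivative 2 * \<alpha> \<Omega> / (w t \<Omega>)^3) (at t)" for t
      proof -
        show ?thesis
          unfolding g_def
          apply (rule derivative_eq_intros dw du dus refl | simp add: wn)+
          apply (simp add: f'_def c_def wn field_simps)
          apply algebra
          done
      qed
      have gp: "g (2 * pi) = g 0"
      proof -
        have "w (0 + 2 * pi) \<Omega> = w 0 \<Omega>" "u (0 + 2 * pi) \<Omega> = u 0 \<Omega>"
             "u (sh + 2 * pi) \<Omega> = u sh \<Omega>" using pw pu by blast+
        then show ?thesis unfolding g_def by (simp add: add.commute)
      qed
      obtain z where z: "0 < z" "z < 2 * pi"
        "g (2 * pi) - g 0 = (2 * pi - 0) * (2 * \<alpha> \<Omega> / (w z \<Omega>)^3)"
        using MVT2[of 0 "2 * pi" g "\<lambda>t. 2 * \<alpha> \<Omega> / (w t \<Omega>)^3"] dg by auto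
      then have "2 * \<alpha> \<Omega> / (w z \<Omega>)^3 = 0" using gp by simp
      then show False using an wn[of z] by simp
    qed
  qed
qed

end
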